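(* Let $n\ge2$, $m\ge1$, and let $G$ be given by the presentation $$G=\Big\langle a_1,\dots,a_n,c_1,\dots,c_m \ \Big|\ [a_i,a_j]=\prod_{t=1}^m c_t^{\lambda_t^{ij}}\ (1\le i<j\le n),\ [a_i,c_j]=[c_k,c_r]=1 \text{ for all } i,j,k,r\Big\rangle$$ for some integers $\lambda_t^{ij}$. Then there are maps $\alpha_i,\gamma_t:G\to\mathbb{Z}$ such that every $g\in G$ can be written as $g=\prod_{i=1}^n a_i^{\alpha_i(g)}\prod_{t=1}^m c_t^{\gamma_t(g)}$, and this expression is unique: if $g=\prod_i a_i^{x_i}\prod_t c_t^{y_t}$ for integers $x_i,y_t$, then $x_i=\alpha_i(g)$ and $y_t=\gamma_t(g)$ for all $i,t$.
   Context: Commutators: $[g,h]=g^{-1}h^{-1}gh$. *)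

theory Defs
  imports "HOL-Algebra.Group"
begin

text \<open>Words over an alphabet of generators: a letter is (x, b), where b = True
  means the inverse letter x^-1.\<close>
type_synonym 'g word = "('g \<times> bool) list"

definition words :: "'g set \<Rightarrow> 'g word set" where
  "words S = {w. fst ` set w \<subseteq> S}"

definition winv :: "'g word \<Rightarrow> 'g word" where
  "winv w = rev (map (\<lambda>(x, b). (x, \<not> b)) w)"

definition wpow :: "'g word \<Rightarrow> int \<Rightarrow> 'g word" where
  "wpow w k = (if 0 \<le> k then concat (replicate (nat k) w)
               else concat (replicate (nat (- k)) (winv w)))"

definition letter :: "'g \<Rightarrow> 'g word" where
  "letter x = [(x, False)]"

definition wcomm :: "'g word \<Rightarrow> 'g word \<Rightarrow> 'g word" where
  "wcomm u v = winv u @ winv v @ u @ v"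

inductive_set pres_eq :: "'g set \<Rightarrow> ('g word \<times> 'g word) set \<Rightarrow> ('g word \<times> 'g word) set"
  for S R where
  refl: "w \<in> words S \<Longrightarrow> (w, w) \<in> pres_eq S R"
| sym: "(u, v) \<in> pres_eq S R \<Longrightarrow> (v, u) \<in> pres_eq S R"
| trans: "(u, v) \<in> pres_eq S R \<Longrightarrow> (v, w) \<in> pres_eq S R \<Longrightarrow> (u, w) \<in> pres_eq S R"
| cancel: "u \<in> words S \<Longrightarrow> v \<in> words S \<Longrightarrow> x \<in> S \<Longrightarrow>
           (u @ [(x, b), (x, \<not> b)] @ v, u @ v) \<in> pres_eq S R"
| rel: "(l, r) \<in> R \<Longrightarrow> u \<in> words S \<Longrightarrow> v \<in> words S \<Longrightarrow>
        (u @ l @ v, u @ r @ v) \<in> pres_eq S R"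

definition presented_group :: "'g set \<Rightarrow> ('g word \<times> 'g word) set \<Rightarrow> ('g word set) monoid" where
  "presented_group S R =
     \<lparr> carrier = words S // pres_eq S R,
       mult = (\<lambda>X Y. pres_eq S R `` {u @ v | u v. u \<in> X \<and> v \<in> Y}),
       one = pres_eq S R `` {[]} \<rparr>"

definition gen_elem :: "'g set \<Rightarrow> ('g word \<times> 'g word) set \<Rightarrow> 'g \<Rightarrow> 'g word set" where
  "gen_elem S R x = pres_eq S R `` {letter x}"

definition lprod :: "('a, 'b) monoid_scheme \<Rightarrow> 'a list \<Rightarrow> 'a" where
  "lprod G xs = foldr (\<lambda>g acc. g \<otimes>\<^bsub>G\<^esub> acc) xs \<one>\<^bsub>G\<^esub>"

datatype gen = A nat | C nat

definition gens :: "nat \<Rightarrow> nat \<Rightarrow> gen set" where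
  "gens n m = A ` {1..n} \<union> C ` {1..m}"

definition rels :: "nat \<Rightarrow> nat \<Rightarrow> (nat \<Rightarrow> nat \<Rightarrow> nat \<Rightarrow> int) \<Rightarrow> (gen word \<times> gen word) set" where
  "rels n m lam =
     {(wcomm (letter (A i)) (letter (A j)),
       concat (map (\<lambda>t. wpow (letter (C t)) (lam i j t)) [1..<Suc m])) | i j.
        1 \<le> i \<and> i < j \<and> j \<le> n}
   \<union> {(wcomm (letter (A i)) (letter (C j)), []) | i j. i \<in> {1..n} \<and> j \<in> {1..m}}
   \<union> {(wcomm (letter (C k)) (letter (C r)), []) | k r. k \<in> {1..m} \<and> r \<in> {1..m}}"

definition Gpres :: "nat \<Rightarrow> nat \<Rightarrow> (nat \<Rightarrow> nat \<Rightarrow> nat \<Rightarrow> int) \<Rightarrow> (gen word set) monoid" where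
  "Gpres n m lam = presented_group (gens n m) (rels n m lam)"

definition a_el :: "nat \<Rightarrow> nat \<Rightarrow> (nat \<Rightarrow> nat \<Rightarrow> nat \<Rightarrow> int) \<Rightarrow> nat \<Rightarrow> gen word set" where
  "a_el n m lam i = gen_elem (gens n m) (rels n m lam) (A i)"

definition c_el :: "nat \<Rightarrow> nat \<Rightarrow> (nat \<Rightarrow> nat \<Rightarrow> nat \<Rightarrow> int) \<Rightarrow> nat \<Rightarrow> gen word set" where
  "c_el n m lam t = gen_elem (gens n m) (rels n m lam) (C t)"

definition normal_form :: "nat \<Rightarrow> nat \<Rightarrow> (nat \<Rightarrow> nat \<Rightarrow> nat \<Rightarrow> int) \<Rightarrow>
    (nat \<Rightarrow> int) \<Rightarrow> (nat \<Rightarrow> int) \<Rightarrow> gen word set" where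
  "normal_form n m lam x y =
     lprod (Gpres n m lam) (map (\<lambda>i. a_el n m lam i [^]\<^bsub>Gpres n m lam\<^esub> x i) [1..<Suc n])
     \<otimes>\<^bsub>Gpres n m lam\<^esub>
     lprod (Gpres n m lam) (map (\<lambda>t. c_el n m lam t [^]\<^bsub>Gpres n m lam\<^esub> y t) [1..<Suc m])"

end

theory Submission
  imports Defs
begin

lemma words_append[simp]: "u @ v \<in> words S \<longleftrightarrow> u \<in> words S \<and> v \<in> words S"
  by (auto simp: words_def)
lemma words_Cons[simp]: "x # v \<in> words S \<longleftrightarrow> fst x \<in> S \<and> v \<in> words S"
  by (auto simp: words_def)
lemma words_Nil[simp]: "[] \<in> words S"
  by (auto simp: words_def)
lemma fst_set_winv: "fst ` set (winv w) = fst ` set w"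
  by (force simp: winv_def image_iff)
lemma winv_words[simp]: "winv w \<in> words S \<longleftrightarrow> w \<in> words S"
  by (simp add: words_def fst_set_winv)
lemma winv_Cons[simp]: "winv ((x,b) # w) = winv w @ [(x, \<not>b)]"
  by (simp add: winv_def)
lemma winv_Nil[simp]: "winv [] = []"
  by (simp add: winv_def)
lemma winv_append: "winv (u @ v) = winv v @ winv u"
  by (simp add: winv_def)

definition wfR :: "'g set \<Rightarrow> ('g word \<times> 'g word) set \<Rightarrow> bool" where
  "wfR S R \<longleftrightarrow> (\<forall>(l,r)\<in>R. l \<in> words S \<and> r \<in> words S)"

lemma pres_eq_words:
  assumes "wfR S R" "(u,v) \<in> pres_eq S R"
  shows "u \<in> words S \<and> v \<in> words S"
  using assms(2) by induct (use assms(1) in \<open>auto simp: wfR_def\<close>)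

lemma pres_eq_cong_left:
  assumes "(u,v) \<in> pres_eq S R" "w \<in> words S"
  shows "(w @ u, w @ v) \<in> pres_eq S R"
  using assms(1)
proof induct
  case (refl w') then show ?case using assms(2) by (intro pres_eq.refl) simp
next
  case (sym u v) then show ?case by (blast intro: pres_eq.sym)
next
  case (trans u v w') then show ?case by (metis pres_eq.trans)
next
  case (cancel u v x b)
  then show ?case using pres_eq.cancel[where u="w @ u" and v=v and x=x and b=b and S=S and R=R] assms(2) by simp
next
  case (rel l r u v)
  then show ?case using pres_eq.rel[where l=l and r=r and u="w @ u" and v=v and S=S and R=R] assms(2) by simp
qed

lemma pres_eq_cong_right:
  assumes "(u,v) \<in> pres_eq S R" "w \<in> words S"
  shows "(u @ w, v @ w) \<in> pres_eq S R"
  using assms(1)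
proof induct
  case (refl w') then show ?case using assms(2) by (intro pres_eq.refl) simp
next
  case (sym u v) then show ?case by (blast intro: pres_eq.sym)
next
  case (trans u v w') then show ?case by (metis pres_eq.trans)
next
  case (cancel u v x b)
  then show ?case using pres_eq.cancel[where u=u and v="v @ w" and x=x and b=b and S=S and R=R] assms(2) by simp
next
  case (rel l r u v)
  then show ?case using pres_eq.rel[where l=l and r=r and u=u and v="v @ w" and S=S and R=R] assms(2) by simp
qed

lemma pres_eq_cong:
  assumes "wfR S R" "(u,u') \<in> pres_eq S R" "(v,v') \<in> pres_eq S R"
  shows "(u @ v, u' @ v') \<in> pres_eq S R"
proof -
  have "u' \<in> words S" "v \<in> words S" using pres_eq_words[OF assms(1)] assms by auto
  then show ?thesis
    by (meson assms pres_eq.trans pres_eq_cong_left pres_eq_cong_right)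
qed

lemma pres_eq_winv:
  assumes "w \<in> words S"
  shows "(winv w @ w, []) \<in> pres_eq S R"
  using assms
proof (induct w)
  case Nil then show ?case by (simp add: pres_eq.refl)
next
  case (Cons l w)
  obtain x b where l: "l = (x,b)" by force
  have "(winv w @ [(x, \<not>b), (x, \<not>\<not>b)] @ w, winv w @ w) \<in> pres_eq S R"
    using Cons.prems l by (intro pres_eq.cancel) auto
  then show ?case using Cons l by (auto intro: pres_eq.trans)
qed

lemma pres_eq_equiv:
  assumes "wfR S R" shows "equiv (words S) (pres_eq S R)"
  unfolding equiv_def refl_on_def sym_def trans_def
  using pres_eq_words[OF assms] by (auto intro: pres_eq.refl pres_eq.sym pres_eq.trans)

definition cls :: "'g set \<Rightarrow> ('g word \<times> 'g word) set \<Rightarrow> 'g word \<Rightarrow> 'g word set" where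
  "cls S R w = pres_eq S R `` {w}"

lemma cls_eq_iff:
  assumes "wfR S R" "u \<in> words S" "v \<in> words S"
  shows "cls S R u = cls S R v \<longleftrightarrow> (u,v) \<in> pres_eq S R"
  unfolding cls_def using eq_equiv_class_iff[OF pres_eq_equiv[OF assms(1)] assms(2,3)] .

lemma cls_mem: "w \<in> words S \<Longrightarrow> w \<in> cls S R w"
  by (simp add: cls_def pres_eq.refl)

lemma mem_cls: "wfR S R \<Longrightarrow> v \<in> cls S R u \<Longrightarrow> u \<in> words S \<Longrightarrow> cls S R v = cls S R u"
  unfolding cls_def
  by (metis ImageE equiv_class_eq pres_eq_equiv singletonD)

lemma carrier_pg: "carrier (presented_group S R) = cls S R ` words S"
  by (auto simp: presented_group_def quotient_def cls_def)

lemma mult_pg: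
  assumes "wfR S R" "u \<in> words S" "v \<in> words S"
  shows "cls S R u \<otimes>\<^bsub>presented_group S R\<^esub> cls S R v = cls S R (u @ v)"
proof -
  have "pres_eq S R `` {u' @ v' | u' v'. u' \<in> cls S R u \<and> v' \<in> cls S R v} = cls S R (u @ v)"
  proof (intro equalityI subsetI)
    fix z assume "z \<in> pres_eq S R `` {u' @ v' | u' v'. u' \<in> cls S R u \<and> v' \<in> cls S R v}"
    then obtain u' v' where "u' \<in> cls S R u" "v' \<in> cls S R v" "(u' @ v', z) \<in> pres_eq S R" by blast
    then have "(u @ v, u' @ v') \<in> pres_eq S R" using pres_eq_cong[OF assms(1)] by (auto simp: cls_def)
    then show "z \<in> cls S R (u @ v)" using \<open>(u' @ v', z) \<in> _\<close> by (auto simp: cls_def intro: pres_eq.trans)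
  next
    fix z assume "z \<in> cls S R (u @ v)"
    moreover have "u @ v \<in> {u' @ v' | u' v'. u' \<in> cls S R u \<and> v' \<in> cls S R v}"
      using cls_mem assms by blast
    ultimately show "z \<in> pres_eq S R `` {u' @ v' | u' v'. u' \<in> cls S R u \<and> v' \<in> cls S R v}"
      by (auto simp: cls_def)
  qed
  then show ?thesis by (simp add: presented_group_def)
qed

lemma one_pg: "\<one>\<^bsub>presented_group S R\<^esub> = cls S R []"
  by (simp add: presented_group_def cls_def)

lemma group_pg:
  assumes "wfR S R" shows "group (presented_group S R)"
proof (rule groupI)
  let ?G = "presented_group S R"
  show "\<And>x y. x \<in> carrier ?G \<Longrightarrow> y \<in> carrier ?G \<Longrightarrow> x \<otimes>\<^bsub>?G\<^esub> y \<in> carrier ?G"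
    by (auto simp: carrier_pg mult_pg[OF assms])
  show "\<one>\<^bsub>?G\<^esub> \<in> carrier ?G" by (auto simp: carrier_pg one_pg)
  show "\<And>x y z. x \<in> carrier ?G \<Longrightarrow> y \<in> carrier ?G \<Longrightarrow> z \<in> carrier ?G \<Longrightarrow>
     x \<otimes>\<^bsub>?G\<^esub> y \<otimes>\<^bsub>?G\<^esub> z = x \<otimes>\<^bsub>?G\<^esub> (y \<otimes>\<^bsub>?G\<^esub> z)"
    by (auto simp: carrier_pg mult_pg[OF assms])
  show "\<And>x. x \<in> carrier ?G \<Longrightarrow> \<one>\<^bsub>?G\<^esub> \<otimes>\<^bsub>?G\<^esub> x = x"
    by (auto simp: carrier_pg mult_pg[OF assms] one_pg)
  show "\<And>x. x \<in> carrier ?G \<Longrightarrow> \<exists>y\<in>carrier ?G. y \<otimes>\<^bsub>?G\<^esub> x = \<one>\<^bsub>?G\<^esub>"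
  proof -
    fix x assume "x \<in> carrier ?G"
    then obtain w where w: "w \<in> words S" "x = cls S R w" by (auto simp: carrier_pg)
    have "cls S R (winv w) \<otimes>\<^bsub>?G\<^esub> x = \<one>\<^bsub>?G\<^esub>"
      using w pres_eq_winv[OF w(1)] by (simp add: mult_pg[OF assms] one_pg cls_eq_iff[OF assms])
    then show "\<exists>y\<in>carrier ?G. y \<otimes>\<^bsub>?G\<^esub> x = \<one>\<^bsub>?G\<^esub>" using w(1) by (auto simp: carrier_pg)
  qed
qed

lemma inv_pg:
  assumes "wfR S R" "w \<in> words S"
  shows "inv\<^bsub>presented_group S R\<^esub> (cls S R w) = cls S R (winv w)"
proof -
  interpret group "presented_group S R" by (rule group_pg[OF assms(1)])
  have "cls S R (winv w) \<otimes>\<^bsub>presented_group S R\<^esub> cls S R w = \<one>\<^bsub>presented_group S R\<^esub>"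
    using assms pres_eq_winv[OF assms(2)] by (simp add: mult_pg one_pg cls_eq_iff)
  then show ?thesis using assms
    by (metis carrier_pg image_eqI inv_equality winv_words)
qed


context group begin

lemma lprod_Cons[simp]: "lprod G (x # xs) = x \<otimes> lprod G xs"
  by (simp add: lprod_def)
lemma lprod_Nil[simp]: "lprod G [] = \<one>"
  by (simp add: lprod_def)

lemma lprod_closed[intro,simp]: "set xs \<subseteq> carrier G \<Longrightarrow> lprod G xs \<in> carrier G"
  by (induct xs) auto

lemma lprod_commute:
  assumes "z \<in> carrier G" "set xs \<subseteq> carrier G" "\<forall>x\<in>set xs. x \<otimes> z = z \<otimes> x"
  shows "lprod G xs \<otimes> z = z \<otimes> lprod G xs"
  using assms(2,3)
proof (induct xs)
  case Nil then show ?case using assms(1) by simp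
next
  case (Cons x xs)
  then have x: "x \<in> carrier G" and xs: "set xs \<subseteq> carrier G" by auto
  have "lprod G (x # xs) \<otimes> z = x \<otimes> (lprod G xs \<otimes> z)"
    using x xs assms(1) by (simp add: m_assoc)
  also have "\<dots> = x \<otimes> (z \<otimes> lprod G xs)" using Cons by simp
  also have "\<dots> = (x \<otimes> z) \<otimes> lprod G xs" using x xs assms(1) by (simp add: m_assoc)
  also have "\<dots> = (z \<otimes> x) \<otimes> lprod G xs" using Cons by simp
  also have "\<dots> = z \<otimes> lprod G (x # xs)" using x xs assms(1) by (simp add: m_assoc)
  finally show ?case .
qed

lemma int_pow_nonneg: "0 \<le> k \<Longrightarrow> x [^] (k::int) = x [^] nat k"
  by (rule pow_nat[symmetric])

lemma int_pow_negative: "x \<in> carrier G \<Longrightarrow> k < 0 \<Longrightarrow> x [^] (k::int) = inv (x [^] nat (-k))"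
proof -
  assume x: "x \<in> carrier G" and k: "k < 0"
  have "x [^] k = x [^] (- (-k))" by simp
  also have "\<dots> = inv (x [^] (-k))" by (rule int_pow_neg[OF x])
  also have "x [^] (-k) = x [^] nat (-k)" using k by (intro int_pow_nonneg) simp
  finally show ?thesis .
qed

lemma commute_int_pow:
  assumes "x \<in> carrier G" "y \<in> carrier G" "x \<otimes> y = y \<otimes> x"
  shows "x [^] (k::int) \<otimes> y = y \<otimes> x [^] k"
proof -
  have nat: "x [^] (n::nat) \<otimes> y = y \<otimes> x [^] n" for n
    using group_commutes_pow assms by blast
  show ?thesis
  proof (cases "k < 0")
    case True
    let ?p = "x [^] nat (-k)"
    have p: "?p \<in> carrier G" using assms by simp
    have "inv ?p \<otimes> y = inv ?p \<otimes> y \<otimes> (?p \<otimes> inv ?p)" using p assms by simp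
    also have "\<dots> = inv ?p \<otimes> (y \<otimes> ?p) \<otimes> inv ?p" using p assms by (simp add: m_assoc)
    also have "\<dots> = inv ?p \<otimes> (?p \<otimes> y) \<otimes> inv ?p" using nat[of "nat (-k)"] by simp
    also have "\<dots> = y \<otimes> inv ?p" using p assms by (simp add: m_assoc[symmetric])
    finally show ?thesis using True assms by (simp only: int_pow_negative)
  next
    case False
    then show ?thesis using nat[of "nat k"] by (simp only: int_pow_nonneg not_less)
  qed
qed

lemma commute_inv:
  assumes "x \<in> carrier G" "y \<in> carrier G" "x \<otimes> y = y \<otimes> x"
  shows "inv x \<otimes> y = y \<otimes> inv x"
proof -
  have "x [^] (- 1::int) = inv x" using assms(1) by (simp only: int_pow_neg int_pow_1)
  then show ?thesis using commute_int_pow[OF assms, of "-1"] by simp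
qed

lemma commute_int_pow2:
  assumes "x \<in> carrier G" "y \<in> carrier G" "x \<otimes> y = y \<otimes> x"
  shows "x [^] (k::int) \<otimes> y [^] (l::int) = y [^] l \<otimes> x [^] k"
  using assms by (metis commute_int_pow int_pow_closed)

lemma collect_nat:
  assumes c: "a \<in> carrier G" "b \<in> carrier G" "w \<in> carrier G"
    and ba: "b \<otimes> a = a \<otimes> b \<otimes> w" and wa: "w \<otimes> a = a \<otimes> w" and wb: "w \<otimes> b = b \<otimes> w"
  shows "b \<otimes> a [^] (k::nat) = a [^] k \<otimes> b \<otimes> w [^] k"
proof (induct k)
  case 0 then show ?case using c by simp
next
  case (Suc k)
  have wak: "w \<otimes> a [^] k = a [^] k \<otimes> w" using wa c by (metis group_commutes_pow)
  have "b \<otimes> a [^] Suc k = (b \<otimes> a) \<otimes> a [^] k" unfolding nat_pow_Suc2[OF c(1)] using c by (simp add: m_assoc)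
  also have "\<dots> = a \<otimes> b \<otimes> (w \<otimes> a [^] k)" using c ba by (simp add: m_assoc)
  also have "\<dots> = a \<otimes> (b \<otimes> a [^] k) \<otimes> w" using c wak by (simp add: m_assoc)
  also have "\<dots> = a \<otimes> (a [^] k \<otimes> b \<otimes> w [^] k) \<otimes> w" using Suc by simp
  also have "\<dots> = a [^] Suc k \<otimes> b \<otimes> w [^] Suc k"
  proof -
    have e1: "a [^] Suc k = a \<otimes> a [^] k" by (rule nat_pow_Suc2[OF c(1)])
    have e2: "w [^] Suc k = w [^] k \<otimes> w" by simp
    show ?thesis unfolding e1 e2 using c by (simp add: m_assoc)
  qed
  finally show ?case .
qed

lemma collect_int:
  assumes c: "a \<in> carrier G" "b \<in> carrier G" "w \<in> carrier G"
    and ba: "b \<otimes> a = a \<otimes> b \<otimes> w" and wa: "w \<otimes> a = a \<otimes> w" and wb: "w \<otimes> b = b \<otimes> w"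
  shows "b \<otimes> a [^] (k::int) = a [^] k \<otimes> b \<otimes> w [^] k"
proof (cases "k < 0")
  case False
  then show ?thesis using collect_nat[OF assms, of "nat k"] by (simp only: int_pow_nonneg not_less)
next
  case True
  have ia: "inv a \<in> carrier G" "inv w \<in> carrier G" using c by auto
  have wa': "inv w \<otimes> inv a = inv a \<otimes> inv w" using c wa by (metis inv_mult_group)
  have ab: "a \<otimes> b = b \<otimes> a \<otimes> inv w" using c ba by (simp add: m_assoc)
  have "b \<otimes> inv a = inv a \<otimes> (a \<otimes> b) \<otimes> inv a" using c by (simp add: m_assoc[symmetric])
  also have "\<dots> = inv a \<otimes> (b \<otimes> a \<otimes> inv w) \<otimes> inv a" using ab by simp
  also have "\<dots> = inv a \<otimes> b \<otimes> a \<otimes> (inv w \<otimes> inv a)" using c by (simp add: m_assoc)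
  also have "\<dots> = inv a \<otimes> b \<otimes> a \<otimes> (inv a \<otimes> inv w)" using wa' by simp
  also have "\<dots> = inv a \<otimes> b \<otimes> inv w"
  proof -
    have "a \<otimes> (inv a \<otimes> inv w) = inv w" using c by (simp add: m_assoc[symmetric])
    then show ?thesis using c by (simp add: m_assoc)
  qed
  finally have ba': "b \<otimes> inv a = inv a \<otimes> b \<otimes> inv w" .
  have wb': "inv w \<otimes> b = b \<otimes> inv w" using commute_inv[OF c(3) c(2) wb] .
  have "b \<otimes> inv a [^] nat (-k) = inv a [^] nat (-k) \<otimes> b \<otimes> inv w [^] nat (-k)"
    using collect_nat[OF ia(1) c(2) ia(2) ba' wa' wb'] .
  then show ?thesis using True c by (simp only: int_pow_negative nat_pow_inv)
qed

end


type_synonym st = "(nat \<Rightarrow> int) \<times> (nat \<Rightarrow> int)"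

definition dA :: "(nat \<Rightarrow> nat \<Rightarrow> nat \<Rightarrow> int) \<Rightarrow> nat \<Rightarrow> (nat \<Rightarrow> int) \<Rightarrow> nat \<Rightarrow> int" where
  "dA lam i x = (\<lambda>t. - (\<Sum>k\<in>{1..<i}. x k * lam k i t))"

definition actA :: "(nat \<Rightarrow> nat \<Rightarrow> nat \<Rightarrow> int) \<Rightarrow> nat \<Rightarrow> int \<Rightarrow> st \<Rightarrow> st" where
  "actA lam i k s = (case s of (x, y) \<Rightarrow> (x(i := x i + k), \<lambda>t. y t + k * dA lam i x t))"

definition actC :: "nat \<Rightarrow> int \<Rightarrow> st \<Rightarrow> st" where
  "actC t k s = (case s of (x, y) \<Rightarrow> (x, y(t := y t + k)))"

lemma dA_upd_ge: "j \<le> i \<Longrightarrow> dA lam j (x(i := v)) = dA lam j x"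
  unfolding dA_def by (intro ext arg_cong[where f=uminus] sum.cong) auto

lemma sum_upd: "finite K \<Longrightarrow> (\<Sum>k\<in>K. ((x::nat \<Rightarrow> int)(i := v)) k * f k) = (\<Sum>k\<in>K. x k * f k) + (if i \<in> K then (v - x i) * f i else 0)"
proof -
  assume KK: "finite K"
  have "(\<Sum>k\<in>K. (x(i := v)) k * f k) = (\<Sum>k\<in>K. x k * f k + (if k = i then (v - x i) * f i else 0))"
    by (intro sum.cong) (auto simp: left_diff_distrib)
  also have "\<dots> = (\<Sum>k\<in>K. x k * f k) + (if i \<in> K then (v - x i) * f i else 0)"
    using KK by (simp add: sum.distrib)
  finally show ?thesis .
qed

lemma dA_upd_lt: "1 \<le> i \<Longrightarrow> i < j \<Longrightarrow> dA lam j (x(i := v)) t = dA lam j x t - (v - x i) * lam i j t"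
  unfolding dA_def using sum_upd[of "{1..<j}" x i v "\<lambda>k. lam k j t"] by simp

lemma actA_add: "actA lam i p (actA lam i q s) = actA lam i (q + p) s"
  by (cases s) (auto simp: actA_def dA_upd_ge algebra_simps)

lemma actA_0[simp]: "actA lam i 0 s = s"
  by (cases s) (auto simp: actA_def)

lemma actC_add: "actC t p (actC t q s) = actC t (q + p) s"
  by (cases s) (auto simp: actC_def)

lemma actC_0[simp]: "actC t 0 s = s"
  by (cases s) (auto simp: actC_def)

locale hg = group G for G (structure) +
  fixes n m :: nat and lam :: "nat \<Rightarrow> nat \<Rightarrow> nat \<Rightarrow> int"
    and a c :: "nat \<Rightarrow> 'a" and Phi :: "'a \<Rightarrow> st"
  assumes a_car: "i \<in> {1..n} \<Longrightarrow> a i \<in> carrier G"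
    and c_car: "t \<in> {1..m} \<Longrightarrow> c t \<in> carrier G"
    and ac: "i \<in> {1..n} \<Longrightarrow> t \<in> {1..m} \<Longrightarrow> a i \<otimes> c t = c t \<otimes> a i"
    and cc: "s \<in> {1..m} \<Longrightarrow> t \<in> {1..m} \<Longrightarrow> c s \<otimes> c t = c t \<otimes> c s"
    and aa: "1 \<le> i \<Longrightarrow> i < j \<Longrightarrow> j \<le> n \<Longrightarrow>
       inv (a i) \<otimes> inv (a j) \<otimes> a i \<otimes> a j = lprod G (map (\<lambda>t. c t [^] lam i j t) [1..<Suc m])"
    and Phi_a: "i \<in> {1..n} \<Longrightarrow> g \<in> carrier G \<Longrightarrow> Phi (a i \<otimes> g) = actA lam i 1 (Phi g)"
    and Phi_c: "t \<in> {1..m} \<Longrightarrow> g \<in> carrier G \<Longrightarrow> Phi (c t \<otimes> g) = actC t 1 (Phi g)"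
    and Phi_1: "Phi \<one> = (\<lambda>_. 0, \<lambda>_. 0)"
begin

definition CL :: "nat list \<Rightarrow> (nat \<Rightarrow> int) \<Rightarrow> 'a" where
  "CL ts y = lprod G (map (\<lambda>t. c t [^] y t) ts)"
definition Cp :: "(nat \<Rightarrow> int) \<Rightarrow> 'a" where
  "Cp y = CL [1..<Suc m] y"
definition AL :: "nat list \<Rightarrow> (nat \<Rightarrow> int) \<Rightarrow> 'a" where
  "AL is x = lprod G (map (\<lambda>i. a i [^] x i) is)"
definition Ap :: "(nat \<Rightarrow> int) \<Rightarrow> 'a" where
  "Ap x = AL [1..<Suc n] x"
definition psi :: "st \<Rightarrow> 'a" where
  "psi s = Ap (fst s) \<otimes> Cp (snd s)"

lemma CL_Cons[simp]: "CL (t # ts) y = c t [^] y t \<otimes> CL ts y"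
  by (simp add: CL_def)
lemma CL_Nil[simp]: "CL [] y = \<one>"
  by (simp add: CL_def)
lemma AL_Cons[simp]: "AL (t # ts) y = a t [^] y t \<otimes> AL ts y"
  by (simp add: AL_def)
lemma AL_Nil[simp]: "AL [] y = \<one>"
  by (simp add: AL_def)

lemma CL_closed[simp]: "set ts \<subseteq> {1..m} \<Longrightarrow> CL ts y \<in> carrier G"
  by (induct ts) (auto simp: c_car)
lemma AL_closed[simp]: "set is \<subseteq> {1..n} \<Longrightarrow> AL is y \<in> carrier G"
  by (induct "is") (auto simp: a_car)
lemma Cp_closed[simp]: "Cp y \<in> carrier G"
  unfolding Cp_def by (rule CL_closed) auto
lemma Ap_closed[simp]: "Ap y \<in> carrier G"
  unfolding Ap_def by (rule AL_closed) auto
lemma psi_closed[simp]: "psi s \<in> carrier G"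
  by (simp add: psi_def)

lemma CL_commute:
  assumes "set ts \<subseteq> {1..m}" "z \<in> carrier G" "\<And>t. t \<in> {1..m} \<Longrightarrow> c t \<otimes> z = z \<otimes> c t"
  shows "CL ts y \<otimes> z = z \<otimes> CL ts y"
  unfolding CL_def
proof (rule lprod_commute[OF assms(2)])
  show "set (map (\<lambda>t. c t [^] y t) ts) \<subseteq> carrier G" using assms(1) c_car by auto
  show "\<forall>x\<in>set (map (\<lambda>t. c t [^] y t) ts). x \<otimes> z = z \<otimes> x"
    using assms c_car commute_int_pow by auto
qed

lemma AL_commute:
  assumes "set is \<subseteq> {1..n}" "z \<in> carrier G" "\<And>i. i \<in> {1..n} \<Longrightarrow> a i \<otimes> z = z \<otimes> a i"
  shows "AL is y \<otimes> z = z \<otimes> AL is y"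
  unfolding AL_def
proof (rule lprod_commute[OF assms(2)])
  show "set (map (\<lambda>t. a t [^] y t) is) \<subseteq> carrier G" using assms(1) a_car by auto
  show "\<forall>x\<in>set (map (\<lambda>t. a t [^] y t) is). x \<otimes> z = z \<otimes> x"
    using assms a_car commute_int_pow by auto
qed

lemma cpow_comm: "s \<in> {1..m} \<Longrightarrow> t \<in> {1..m} \<Longrightarrow> c s [^] (k::int) \<otimes> c t [^] (l::int) = c t [^] l \<otimes> c s [^] k"
  using commute_int_pow2[OF c_car c_car cc] by blast

lemma CL_c_comm: "set ts \<subseteq> {1..m} \<Longrightarrow> t \<in> {1..m} \<Longrightarrow> CL ts y \<otimes> c t [^] (k::int) = c t [^] k \<otimes> CL ts y"
proof (rule CL_commute)
  fix s assume "s \<in> {1..m}" and "t \<in> {1..m}"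
  then show "c s \<otimes> c t [^] k = c t [^] k \<otimes> c s"
    using commute_int_pow[OF c_car c_car cc, of t s k] by simp
qed (auto simp: c_car)

lemma CL_a_comm: "set ts \<subseteq> {1..m} \<Longrightarrow> i \<in> {1..n} \<Longrightarrow> CL ts y \<otimes> a i [^] (k::int) = a i [^] k \<otimes> CL ts y"
proof (rule CL_commute)
  fix s assume "s \<in> {1..m}" and "i \<in> {1..n}"
  then show "c s \<otimes> a i [^] k = a i [^] k \<otimes> c s"
    using commute_int_pow[OF a_car c_car ac, of i s k] by simp
qed (auto simp: a_car)

end


context group begin
lemma cancel_l1[simp]: "x \<in> carrier G \<Longrightarrow> y \<in> carrier G \<Longrightarrow> x \<otimes> (inv x \<otimes> y) = y"
  by (simp add: m_assoc[symmetric])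
lemma cancel_l2[simp]: "x \<in> carrier G \<Longrightarrow> y \<in> carrier G \<Longrightarrow> inv x \<otimes> (x \<otimes> y) = y"
  by (simp add: m_assoc[symmetric])
end

context hg begin

lemma CL_mult: "set ts \<subseteq> {1..m} \<Longrightarrow> CL ts y \<otimes> CL ts y' = CL ts (\<lambda>t. y t + y' t)"
proof (induct ts)
  case Nil then show ?case by simp
next
  case (Cons t ts)
  then have t: "t \<in> {1..m}" and ts: "set ts \<subseteq> {1..m}" by auto
  have ct: "c t \<in> carrier G" using t c_car by simp
  have "CL (t # ts) y \<otimes> CL (t # ts) y' = c t [^] y t \<otimes> (CL ts y \<otimes> c t [^] y' t) \<otimes> CL ts y'"
    using ct ts by (simp add: m_assoc)
  also have "\<dots> = c t [^] y t \<otimes> (c t [^] y' t \<otimes> CL ts y) \<otimes> CL ts y'"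
    using CL_c_comm[OF ts t] by simp
  also have "\<dots> = (c t [^] y t \<otimes> c t [^] y' t) \<otimes> (CL ts y \<otimes> CL ts y')"
    using ct ts by (simp add: m_assoc)
  also have "\<dots> = CL (t # ts) (\<lambda>t. y t + y' t)"
    using Cons ts ct by (simp add: int_pow_mult)
  finally show ?case .
qed

lemma CL_zero: "CL ts (\<lambda>_. 0) = \<one>"
  by (induct ts) simp_all

lemma CL_pow: "set ts \<subseteq> {1..m} \<Longrightarrow> CL ts y [^] (e::int) = CL ts (\<lambda>t. e * y t)"
proof (induct ts)
  case Nil then show ?case by simp
next
  case (Cons t ts)
  then have t: "t \<in> {1..m}" and ts: "set ts \<subseteq> {1..m}" by auto
  have ct: "c t \<in> carrier G" using t c_car by simp
  have comm: "c t [^] y t \<otimes> CL ts y = CL ts y \<otimes> c t [^] y t"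
    using CL_c_comm[OF ts t] by simp
  have "CL (t # ts) y [^] e = (c t [^] y t) [^] e \<otimes> CL ts y [^] e"
    using int_pow_mult_distrib[OF comm] ct ts by simp
  also have "\<dots> = CL (t # ts) (\<lambda>t. e * y t)"
    using Cons ts ct by (simp add: int_pow_pow mult.commute)
  finally show ?case .
qed

lemma CL_delta: "distinct ts \<Longrightarrow> set ts \<subseteq> {1..m} \<Longrightarrow>
   CL ts (\<lambda>s. if s = t then 1 else 0) = (if t \<in> set ts then c t else \<one>)"
  by (induct ts) (auto simp: c_car)

lemma Cp_mult: "Cp y \<otimes> Cp y' = Cp (\<lambda>t. y t + y' t)"
  unfolding Cp_def by (rule CL_mult) auto
lemma Cp_pow: "Cp y [^] (e::int) = Cp (\<lambda>t. e * y t)"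
  unfolding Cp_def by (rule CL_pow) auto
lemma Cp_zero: "Cp (\<lambda>_. 0) = \<one>"
  unfolding Cp_def by (rule CL_zero)
lemma Cp_delta: "t \<in> {1..m} \<Longrightarrow> Cp (\<lambda>s. if s = t then 1 else 0) = c t"
  unfolding Cp_def by (subst CL_delta) auto

lemma Cp_a: "i \<in> {1..n} \<Longrightarrow> Cp y \<otimes> a i = a i \<otimes> Cp y"
  unfolding Cp_def by (rule CL_commute) (auto simp: a_car ac)
lemma Cp_c: "t \<in> {1..m} \<Longrightarrow> Cp y \<otimes> c t = c t \<otimes> Cp y"
  unfolding Cp_def by (rule CL_commute) (auto simp: c_car cc)
lemma Cp_AL: "set is \<subseteq> {1..n} \<Longrightarrow> AL is x \<otimes> Cp y = Cp y \<otimes> AL is x"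
  by (rule AL_commute) (auto simp: Cp_a)
lemma c_AL: "set is \<subseteq> {1..n} \<Longrightarrow> t \<in> {1..m} \<Longrightarrow> AL is x \<otimes> c t = c t \<otimes> AL is x"
  by (rule AL_commute) (auto simp: c_car ac)

lemma aa_swap:
  assumes "1 \<le> k" "k < i" "i \<le> n"
  shows "a i \<otimes> a k [^] (e::int) = a k [^] e \<otimes> a i \<otimes> Cp (\<lambda>t. - e * lam k i t)"
proof -
  let ?Z = "Cp (lam k i)"
  have ak: "a k \<in> carrier G" and ai: "a i \<in> carrier G" using assms a_car by auto
  have Z: "inv (a k) \<otimes> inv (a i) \<otimes> a k \<otimes> a i = ?Z"
    using aa[OF assms] by (simp add: Cp_def CL_def)
  have "a i \<otimes> a k \<otimes> ?Z = a k \<otimes> a i"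
    unfolding Z[symmetric] using ak ai by (simp add: m_assoc)
  then have ba: "a i \<otimes> a k = a k \<otimes> a i \<otimes> inv ?Z"
    using ak ai by (metis Cp_closed inv_solve_right m_closed)
  have iZ: "inv ?Z = Cp (\<lambda>t. - lam k i t)"
  proof -
    have "inv ?Z = ?Z [^] (-1::int)" by (simp only: int_pow_neg[OF Cp_closed] int_pow_1[OF Cp_closed])
    then show ?thesis by (simp add: Cp_pow)
  qed
  have w1: "inv ?Z \<otimes> a k = a k \<otimes> inv ?Z" unfolding iZ using Cp_a assms by simp
  have w2: "inv ?Z \<otimes> a i = a i \<otimes> inv ?Z" unfolding iZ using Cp_a assms by simp
  have "a i \<otimes> a k [^] e = a k [^] e \<otimes> a i \<otimes> inv ?Z [^] e"
    using collect_int[OF ak ai _ ba w1 w2] by simp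
  then show ?thesis unfolding iZ Cp_pow by simp
qed

lemma AL_cong: "(\<And>k. k \<in> set is \<Longrightarrow> x k = x' k) \<Longrightarrow> AL is x = AL is x'"
  unfolding AL_def by (metis (no_types, lifting) map_eq_conv)

lemma AL_step:
  assumes "sorted_wrt (<) is" "set is \<subseteq> {1..n}" "i \<in> set is"
  shows "a i \<otimes> AL is x = AL is (x(i := x i + 1)) \<otimes> Cp (\<lambda>t. - (\<Sum>k\<in>{k\<in>set is. k < i}. x k * lam k i t))"
  using assms
proof (induct "is")
  case Nil then show ?case by simp
next
  case (Cons j js)
  have js: "set js \<subseteq> {1..n}" and j: "j \<in> {1..n}" and srt: "sorted_wrt (<) js"
    and gt: "\<And>k. k \<in> set js \<Longrightarrow> j < k" using Cons.prems by auto
  have aj: "a j \<in> carrier G" using j a_car by simp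
  show ?case
  proof (cases "j = i")
    case True
    have nin: "i \<notin> set js" using gt True by blast
    have e: "{k \<in> set (j # js). k < i} = {}" using gt True by (auto dest: gt)
    have AL': "AL js (x(i := x i + 1)) = AL js x" by (rule AL_cong) (use nin in auto)
    have "a i \<otimes> AL (j # js) x = (a i \<otimes> a i [^] x i) \<otimes> AL js x"
      using True aj js by (simp add: m_assoc)
    also have "a i \<otimes> a i [^] x i = a i [^] (1 + x i)"
      using True aj by (simp add: int_pow_mult)
    also have "a i [^] (1 + x i) = a i [^] (x i + 1)" by (simp add: add.commute)
    finally have l: "a i \<otimes> AL (j # js) x = a i [^] (x i + 1) \<otimes> AL js x" .
    have Cz: "Cp (\<lambda>t. - (\<Sum>k\<in>{k \<in> set (j # js). k < i}. x k * lam k i t)) = \<one>"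
      unfolding e by (simp add: Cp_zero)
    have r: "AL (j # js) (x(i := x i + 1)) = a i [^] (x i + 1) \<otimes> AL js x"
      using True AL' by simp
    show ?thesis unfolding Cz r l using aj js True by simp
  next
    case False
    then have i: "i \<in> set js" using Cons.prems by simp
    then have ji: "j < i" using gt by blast
    have iin: "i \<in> {1..n}" using i js by auto
    have ai: "a i \<in> carrier G" using iin a_car by simp
    let ?D = "\<lambda>js. (\<lambda>t. - (\<Sum>k\<in>{k\<in>set js. k < i}. x k * lam k i t))"
    let ?W = "Cp (\<lambda>t. - x j * lam j i t)"
    have IH: "a i \<otimes> AL js x = AL js (x(i := x i + 1)) \<otimes> Cp (?D js)"
      using Cons.hyps[OF srt js i] .
    have "a i \<otimes> AL (j # js) x = (a i \<otimes> a j [^] x j) \<otimes> AL js x"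
      using ai aj js by (simp add: m_assoc)
    also have "\<dots> = a j [^] x j \<otimes> a i \<otimes> ?W \<otimes> AL js x"
      using aa_swap[of j i "x j"] ji j iin by simp
    also have "\<dots> = a j [^] x j \<otimes> (a i \<otimes> AL js x) \<otimes> ?W"
      using Cp_AL[OF js, of x "\<lambda>t. - x j * lam j i t"] ai aj js by (simp add: m_assoc)
    also have "\<dots> = a j [^] x j \<otimes> AL js (x(i := x i + 1)) \<otimes> (Cp (?D js) \<otimes> ?W)"
      unfolding IH using aj js by (simp add: m_assoc)
    also have "Cp (?D js) \<otimes> ?W = Cp (?D (j # js))"
    proof -
      have nj: "j \<notin> {k \<in> set js. k < i}" using gt by blast
      have eqs: "{k \<in> set (j # js). k < i} = insert j {k \<in> set js. k < i}" using ji by auto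
      have K: "finite {k \<in> set js. k < i}" by simp
      have "\<And>t. (\<Sum>k\<in>{k \<in> set (j # js). k < i}. x k * lam k i t)
            = x j * lam j i t + (\<Sum>k\<in>{k \<in> set js. k < i}. x k * lam k i t)"
        unfolding eqs by (rule sum.insert[OF K nj])
      then have "?D (j # js) = (\<lambda>t. ?D js t + - x j * lam j i t)"
        by (simp add: fun_eq_iff)
      then show ?thesis by (simp add: Cp_mult)
    qed
    finally show ?thesis using False aj js by (simp add: m_assoc)
  qed
qed

lemma sorted_upt: "sorted_wrt (<) [1..<Suc n]"
  by (rule sorted_wrt_upt)

lemma Ap_step:
  assumes "i \<in> {1..n}"
  shows "a i \<otimes> Ap x = Ap (x(i := x i + 1)) \<otimes> Cp (dA lam i x)"
proof -
  have e: "{k \<in> set [1..<Suc n]. k < i} = {1..<i}" using assms by auto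
  have s: "set [1..<Suc n] \<subseteq> {1..n}" "i \<in> set [1..<Suc n]" using assms by auto
  show ?thesis unfolding Ap_def dA_def using AL_step[OF sorted_upt s, of x] unfolding e .
qed

lemma psi_a: "i \<in> {1..n} \<Longrightarrow> a i \<otimes> psi s = psi (actA lam i 1 s)"
proof (cases s)
  case (Pair x y)
  assume i: "i \<in> {1..n}"
  have "a i \<otimes> psi s = (a i \<otimes> Ap x) \<otimes> Cp y" using Pair i a_car by (simp add: psi_def m_assoc)
  also have "\<dots> = Ap (x(i := x i + 1)) \<otimes> (Cp (dA lam i x) \<otimes> Cp y)" using Ap_step[OF i] by (simp add: m_assoc)
  also have "\<dots> = psi (actA lam i 1 s)" using Pair by (simp add: Cp_mult psi_def actA_def add.commute)
  finally show ?thesis .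
qed

lemma psi_c: "t \<in> {1..m} \<Longrightarrow> c t \<otimes> psi s = psi (actC t 1 s)"
proof (cases s)
  case (Pair x y)
  assume t: "t \<in> {1..m}"
  have ct: "c t \<in> carrier G" using t c_car by simp
  have "c t \<otimes> psi s = (c t \<otimes> Ap x) \<otimes> Cp y" using Pair ct by (simp add: psi_def m_assoc)
  also have "\<dots> = Ap x \<otimes> (Cp (\<lambda>s. if s = t then 1 else 0) \<otimes> Cp y)"
  proof -
    have sn: "set [1..<Suc n] \<subseteq> {1..n}" by auto
    have "c t \<otimes> Ap x = Ap x \<otimes> c t" using c_AL[OF sn t, of x] unfolding Ap_def by simp
    then show ?thesis using ct Cp_delta[OF t] by (simp add: m_assoc)
  qed
  also have "\<dots> = psi (actC t 1 s)"
  proof -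
    have "(\<lambda>s. (if s = t then 1 else 0) + y s) = y(t := y t + 1)" by (auto simp: fun_eq_iff)
    then show ?thesis using Pair by (simp add: Cp_mult psi_def actC_def)
  qed
  finally show ?thesis .
qed

lemma psi_ainv: "i \<in> {1..n} \<Longrightarrow> inv (a i) \<otimes> psi s = psi (actA lam i (-1) s)"
proof -
  assume i: "i \<in> {1..n}"
  have "psi s = a i \<otimes> psi (actA lam i (-1) s)" using psi_a[OF i] by (simp add: actA_add)
  then show ?thesis using i a_car by simp
qed

lemma psi_cinv: "t \<in> {1..m} \<Longrightarrow> inv (c t) \<otimes> psi s = psi (actC t (-1) s)"
proof -
  assume t: "t \<in> {1..m}"
  have "psi s = c t \<otimes> psi (actC t (-1) s)" using psi_c[OF t] by (simp add: actC_add)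
  then show ?thesis using t c_car by simp
qed

lemma psi_zero: "psi (\<lambda>_. 0, \<lambda>_. 0) = \<one>"
proof -
  have "AL is (\<lambda>_. 0) = \<one>" for "is" by (induct "is") auto
  then show ?thesis by (simp add: psi_def Ap_def Cp_zero)
qed

end


context hg begin

lemma Phi_apow:
  assumes i: "i \<in> {1..n}" and g: "g \<in> carrier G"
  shows "Phi (a i [^] (k::int) \<otimes> g) = actA lam i k (Phi g)"
proof -
  have ai: "a i \<in> carrier G" using i a_car by simp
  have nat: "Phi (a i [^] (p::nat) \<otimes> g) = actA lam i (int p) (Phi g)" if g: "g \<in> carrier G" for p g
    using g
  proof (induct p arbitrary: g)
    case 0 then show ?case by simp
  next
    case (Suc p g)
    have "a i [^] Suc p \<otimes> g = a i \<otimes> (a i [^] p \<otimes> g)"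
      unfolding nat_pow_Suc2[OF ai] using ai Suc by (simp add: m_assoc)
    then show ?case using Phi_a[OF i, of "a i [^] p \<otimes> g"] Suc ai by (simp add: actA_add add.commute)
  qed
  show ?thesis
  proof (cases "k < 0")
    case False
    then show ?thesis using nat[OF g, of "nat k"] by (simp only: int_pow_nonneg not_less) simp
  next
    case True
    let ?p = "a i [^] nat (-k)"
    let ?h = "inv ?p \<otimes> g"
    have h: "?h \<in> carrier G" using ai g by simp
    have "?p \<otimes> ?h = g" using ai g by simp
    then have "Phi g = actA lam i (int (nat (-k))) (Phi ?h)" using nat[OF h, of "nat (-k)"] by simp
    then have "actA lam i k (Phi g) = Phi ?h" using True by (simp add: actA_add)
    then show ?thesis using True ai by (simp add: int_pow_negative)
  qed
qed

lemma Phi_cpow: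
  assumes t: "t \<in> {1..m}" and g: "g \<in> carrier G"
  shows "Phi (c t [^] (k::int) \<otimes> g) = actC t k (Phi g)"
proof -
  have ct: "c t \<in> carrier G" using t c_car by simp
  have nat: "Phi (c t [^] (p::nat) \<otimes> g) = actC t (int p) (Phi g)" if g: "g \<in> carrier G" for p g
    using g
  proof (induct p arbitrary: g)
    case 0 then show ?case by simp
  next
    case (Suc p g)
    have "c t [^] Suc p \<otimes> g = c t \<otimes> (c t [^] p \<otimes> g)"
      unfolding nat_pow_Suc2[OF ct] using ct Suc by (simp add: m_assoc)
    then show ?case using Phi_c[OF t, of "c t [^] p \<otimes> g"] Suc ct by (simp add: actC_add add.commute)
  qed
  show ?thesis
  proof (cases "k < 0")
    case False
    then show ?thesis using nat[OF g, of "nat k"] by (simp only: int_pow_nonneg not_less) simp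
  next
    case True
    let ?p = "c t [^] nat (-k)"
    let ?h = "inv ?p \<otimes> g"
    have h: "?h \<in> carrier G" using ct g by simp
    have "?p \<otimes> ?h = g" using ct g by simp
    then have "Phi g = actC t (int (nat (-k))) (Phi ?h)" using nat[OF h, of "nat (-k)"] by simp
    then have "actC t k (Phi g) = Phi ?h" using True by (simp add: actC_add)
    then show ?thesis using True ct by (simp add: int_pow_negative)
  qed
qed

lemma Phi_CL:
  "distinct ts \<Longrightarrow> set ts \<subseteq> {1..m} \<Longrightarrow>
   Phi (CL ts y) = (\<lambda>_. 0, \<lambda>t. if t \<in> set ts then y t else 0)"
proof (induct ts)
  case Nil then show ?case by (simp add: Phi_1)
next
  case (Cons t ts)
  then have t: "t \<in> {1..m}" and ts: "set ts \<subseteq> {1..m}" and nt: "t \<notin> set ts" and d: "distinct ts"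
    by auto
  have "Phi (CL (t # ts) y) = actC t (y t) (Phi (CL ts y))"
    using Phi_cpow[OF t CL_closed[OF ts]] by simp
  also have "\<dots> = (\<lambda>_. 0, \<lambda>s. if s \<in> set (t # ts) then y s else 0)"
    using Cons.hyps[OF d ts] nt by (auto simp: actC_def fun_eq_iff)
  finally show ?case .
qed

lemma Phi_AL:
  "sorted_wrt (<) is \<Longrightarrow> set is \<subseteq> {1..n} \<Longrightarrow> h \<in> carrier G \<Longrightarrow> Phi h = (\<lambda>_. 0, yc) \<Longrightarrow>
   Phi (AL is x \<otimes> h) = (\<lambda>k. if k \<in> set is then x k else 0, yc)"
proof (induct "is")
  case Nil then show ?case by simp
next
  case (Cons i js)
  then have i: "i \<in> {1..n}" and js: "set js \<subseteq> {1..n}" and srt: "sorted_wrt (<) js"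
    and gt: "\<And>k. k \<in> set js \<Longrightarrow> i < k" by auto
  let ?r = "\<lambda>k. if k \<in> set js then x k else 0"
  have ai: "a i \<in> carrier G" using i a_car by simp
  have "AL (i # js) x \<otimes> h = a i [^] x i \<otimes> (AL js x \<otimes> h)" using ai js Cons.prems by (simp add: m_assoc)
  then have "Phi (AL (i # js) x \<otimes> h) = actA lam i (x i) (?r, yc)"
    using Phi_apow[OF i, of "AL js x \<otimes> h"] Cons.hyps[OF srt js] Cons.prems js by simp
  also have "dA lam i ?r = (\<lambda>_. 0)"
  proof -
    have "\<And>k. k \<in> {1..<i} \<Longrightarrow> ?r k = 0" using gt by fastforce
    then show ?thesis unfolding dA_def by (simp add: fun_eq_iff)
  qed
  then have "actA lam i (x i) (?r, yc) = (\<lambda>k. if k \<in> set (i # js) then x k else 0, yc)"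
    using gt by (auto simp: actA_def fun_eq_iff)
  finally show ?case .
qed

lemma Phi_psi: "Phi (psi (x, y)) = (\<lambda>k. if k \<in> {1..n} then x k else 0, \<lambda>t. if t \<in> {1..m} then y t else 0)"
proof -
  have c1: "set [1..<Suc m] \<subseteq> {1..m}" "distinct [1..<Suc m]" by auto
  have c2: "set [1..<Suc n] \<subseteq> {1..n}" by auto
  have sm: "set [1..<Suc m] = {1..m}" "set [1..<Suc n] = {1..n}" by auto
  have "Phi (Cp y) = (\<lambda>_. 0, \<lambda>t. if t \<in> {1..m} then y t else 0)"
    unfolding Cp_def using Phi_CL[OF c1(2) c1(1), of y] unfolding sm .
  then have "Phi (AL [1..<Suc n] x \<otimes> Cp y) =
     (\<lambda>k. if k \<in> set [1..<Suc n] then x k else 0, \<lambda>t. if t \<in> {1..m} then y t else 0)"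
    by (intro Phi_AL[OF sorted_upt c2]) simp_all
  then show ?thesis unfolding sm psi_def Ap_def fst_conv snd_conv .
qed

end


fun actL :: "(nat \<Rightarrow> nat \<Rightarrow> nat \<Rightarrow> int) \<Rightarrow> gen \<times> bool \<Rightarrow> st \<Rightarrow> st" where
  "actL lam (A i, b) = actA lam i (if b then -1 else 1)"
| "actL lam (C t, b) = actC t (if b then -1 else 1)"

definition phi :: "(nat \<Rightarrow> nat \<Rightarrow> nat \<Rightarrow> int) \<Rightarrow> gen word \<Rightarrow> st" where
  "phi lam w = foldr (actL lam) w (\<lambda>_. 0, \<lambda>_. 0)"

lemma A_in_gens[simp]: "A i \<in> gens n m \<longleftrightarrow> i \<in> {1..n}"
  by (auto simp: gens_def)
lemma C_in_gens[simp]: "C i \<in> gens n m \<longleftrightarrow> i \<in> {1..m}"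
  by (auto simp: gens_def)

lemma letter_words[simp]: "letter x \<in> words S \<longleftrightarrow> x \<in> S"
  by (simp add: letter_def)
lemma wcomm_words[simp]: "u \<in> words S \<Longrightarrow> v \<in> words S \<Longrightarrow> wcomm u v \<in> words S"
  by (simp add: wcomm_def)
lemma rep_words: "w \<in> words S \<Longrightarrow> concat (replicate p w) \<in> words S"
  by (induct p) auto
lemma wpow_words[simp]: "w \<in> words S \<Longrightarrow> wpow w k \<in> words S"
  by (simp add: wpow_def rep_words)
lemma concat_words: "(\<And>x. x \<in> set ws \<Longrightarrow> x \<in> words S) \<Longrightarrow> concat ws \<in> words S"
  by (induct ws) auto

lemma wfR_rels: "wfR (gens n m) (rels n m lam)"
  unfolding wfR_def rels_def by (auto intro!: concat_words)

lemma foldr_rep: "foldr f (replicate p l) = f l ^^ p"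
  by (induct p) auto

lemma actC_iter: "actC t s ^^ p = actC t (int p * s)"
  by (induct p) (auto simp: actC_add algebra_simps fun_eq_iff)

lemma foldr_wpowC: "foldr (actL lam) (wpow (letter (C t)) k) = actC t k"
proof (cases "0 \<le> k")
  case True
  have "concat (replicate (nat k) [(C t, False)]) = replicate (nat k) (C t, False)"
    by (induct "nat k") auto
  then show ?thesis using True by (simp add: wpow_def letter_def foldr_rep actC_iter)
next
  case False
  have "concat (replicate (nat (-k)) [(C t, True)]) = replicate (nat (-k)) (C t, True)"
    by (induct "nat (-k)") auto
  then show ?thesis using False by (simp add: wpow_def letter_def winv_def foldr_rep actC_iter)
qed

lemma foldr_concat_map: "foldr f (concat (map h ts)) = foldr (\<lambda>t. foldr f (h t)) ts"
  by (induct ts) auto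

lemma foldr_actC_list: "distinct ts \<Longrightarrow>
   foldr (\<lambda>t. actC t (z t)) ts s = (fst s, \<lambda>t'. snd s t' + (if t' \<in> set ts then z t' else 0))"
  by (induct ts arbitrary: s) (auto simp: actC_def fun_eq_iff split: prod.splits)

lemma comm_AA:
  assumes "1 \<le> i" "i < j"
  shows "actA lam i (-1) (actA lam j (-1) (actA lam i 1 (actA lam j 1 (x, y)))) = (x, \<lambda>t. y t + lam i j t)"
  using assms by (auto simp: actA_def dA_upd_ge dA_upd_lt fun_eq_iff)

definition lamr :: "nat \<Rightarrow> (nat \<Rightarrow> nat \<Rightarrow> nat \<Rightarrow> int) \<Rightarrow> nat \<Rightarrow> nat \<Rightarrow> nat \<Rightarrow> int" where
  "lamr m lam = (\<lambda>i j t. if t \<in> {1..m} then lam i j t else 0)"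

lemma rel_ok:
  assumes "(l, r) \<in> rels n m lam"
  shows "foldr (actL (lamr m lam)) l = foldr (actL (lamr m lam)) r"
  using assms unfolding rels_def
proof (elim UnE CollectE exE conjE)
  fix i j assume lr: "(l, r) = (wcomm (letter (A i)) (letter (A j)),
       concat (map (\<lambda>t. wpow (letter (C t)) (lam i j t)) [1..<Suc m]))"
    and ij: "1 \<le> i" "i < j" "j \<le> n"
  have "foldr (actL (lamr m lam)) r = foldr (\<lambda>t. actC t (lamr m lam i j t)) [1..<Suc m]"
  proof -
    have "foldr (actL (lamr m lam)) r = foldr (\<lambda>t. actC t (lam i j t)) [1..<Suc m]"
      using lr by (simp add: foldr_concat_map foldr_wpowC del: upt_Suc)
    also have "\<dots> = foldr (\<lambda>t. actC t (lamr m lam i j t)) [1..<Suc m]"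
      by (rule ext, rule foldr_cong) (auto simp: lamr_def)
    finally show ?thesis .
  qed
  moreover have "foldr (actL (lamr m lam)) l = foldr (\<lambda>t. actC t (lamr m lam i j t)) [1..<Suc m]"
  proof
    fix s :: st
    obtain x y where s: "s = (x, y)" by force
    have "foldr (actL (lamr m lam)) l s = (x, \<lambda>t. y t + lamr m lam i j t)"
      using lr s comm_AA[OF ij(1,2)] by (simp add: wcomm_def letter_def winv_def)
    also have "\<dots> = foldr (\<lambda>t. actC t (lamr m lam i j t)) [1..<Suc m] s"
      unfolding foldr_actC_list[OF distinct_upt] s using ij by (auto simp: fun_eq_iff lamr_def)
    finally show "foldr (actL (lamr m lam)) l s = foldr (\<lambda>t. actC t (lamr m lam i j t)) [1..<Suc m] s" .
  qed
  ultimately show ?thesis by simp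
next
  fix i j assume "(l, r) = (wcomm (letter (A i)) (letter (C j)), [])"
  then show ?thesis
    by (auto simp: wcomm_def letter_def winv_def fun_eq_iff actA_def actC_def dA_upd_ge[OF order_refl])
next
  fix k r' assume "(l, r) = (wcomm (letter (C k)) (letter (C r')), [])"
  then show ?thesis
    by (auto simp: wcomm_def letter_def winv_def fun_eq_iff actC_def)
qed

lemma cancel_ok[simp]: "actL lam (x, b) (actL lam (x, \<not> b) s) = s"
  by (cases x) (auto simp: actA_add actC_add)

lemma phi_resp:
  assumes "(u, v) \<in> pres_eq (gens n m) (rels n m lam)"
  shows "foldr (actL (lamr m lam)) u = foldr (actL (lamr m lam)) v"
  using assms
proof induct
  case (cancel u v x b)
  show ?case by (simp add: fun_eq_iff)
next
  case (rel l r u v)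
  show ?case by (rule ext) (simp only: foldr_append rel_ok[OF rel(1)])
qed auto


lemma (in group) comm_from: "x \<in> carrier G \<Longrightarrow> y \<in> carrier G \<Longrightarrow>
   inv x \<otimes> inv y \<otimes> x \<otimes> y = \<one> \<Longrightarrow> x \<otimes> y = y \<otimes> x"
proof -
  assume x: "x \<in> carrier G" and y: "y \<in> carrier G" and e: "inv x \<otimes> inv y \<otimes> x \<otimes> y = \<one>"
  have "x \<otimes> y = y \<otimes> x \<otimes> (inv x \<otimes> inv y \<otimes> x \<otimes> y)" using x y by (simp add: m_assoc)
  then show ?thesis using e x y by simp
qed

definition PhiG :: "nat \<Rightarrow> nat \<Rightarrow> (nat \<Rightarrow> nat \<Rightarrow> nat \<Rightarrow> int) \<Rightarrow> gen word set \<Rightarrow> st" where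
  "PhiG n m lam g = phi (lamr m lam) (SOME w. w \<in> g)"

context
  fixes n m :: nat and lam :: "nat \<Rightarrow> nat \<Rightarrow> nat \<Rightarrow> int"
begin

abbreviation "SS \<equiv> gens n m"
abbreviation "RR \<equiv> rels n m lam"
abbreviation "GG \<equiv> Gpres n m lam"

lemma GG_def': "GG = presented_group SS RR" by (simp add: Gpres_def)

lemma GG_group: "group GG"
  unfolding GG_def' by (rule group_pg[OF wfR_rels])

lemma GG_mult: "u \<in> words SS \<Longrightarrow> v \<in> words SS \<Longrightarrow> cls SS RR u \<otimes>\<^bsub>GG\<^esub> cls SS RR v = cls SS RR (u @ v)"
  unfolding GG_def' by (rule mult_pg[OF wfR_rels])

lemma GG_one: "\<one>\<^bsub>GG\<^esub> = cls SS RR []"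
  unfolding GG_def' by (rule one_pg)

lemma GG_inv: "w \<in> words SS \<Longrightarrow> inv\<^bsub>GG\<^esub> (cls SS RR w) = cls SS RR (winv w)"
  unfolding GG_def' by (rule inv_pg[OF wfR_rels])

lemma GG_carrier: "carrier GG = cls SS RR ` words SS"
  unfolding GG_def' by (rule carrier_pg)

lemma cls_in: "w \<in> words SS \<Longrightarrow> cls SS RR w \<in> carrier GG"
  by (simp add: GG_carrier)

lemma cls_rep: "w \<in> words SS \<Longrightarrow> cls SS RR (concat (replicate p w)) = cls SS RR w [^]\<^bsub>GG\<^esub> p"
proof (induct p)
  case 0 then show ?case by (simp add: GG_one)
next
  case (Suc p)
  interpret group GG by (rule GG_group)
  have "cls SS RR (concat (replicate (Suc p) w)) = cls SS RR w \<otimes>\<^bsub>GG\<^esub> cls SS RR (concat (replicate p w))"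
    using GG_mult[OF Suc(2) rep_words[OF Suc(2)], of p] by simp
  then show ?case using Suc nat_pow_Suc2[OF cls_in[OF Suc(2)], of p] by (simp del: nat_pow_Suc)
qed

lemma cls_wpow: "w \<in> words SS \<Longrightarrow> cls SS RR (wpow w k) = cls SS RR w [^]\<^bsub>GG\<^esub> k"
proof -
  assume w: "w \<in> words SS"
  interpret group GG by (rule GG_group)
  show ?thesis
  proof (cases "0 \<le> k")
    case True
    then have "wpow w k = concat (replicate (nat k) w)" by (simp add: wpow_def)
    then have "cls SS RR (wpow w k) = cls SS RR w [^]\<^bsub>GG\<^esub> nat k" using w by (simp only: cls_rep)
    then show ?thesis using True by (simp only: int_pow_nonneg)
  next
    case False
    then have "wpow w k = concat (replicate (nat (-k)) (winv w))" by (simp add: wpow_def)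
    then have "cls SS RR (wpow w k) = cls SS RR (winv w) [^]\<^bsub>GG\<^esub> nat (-k)"
      using w by (simp only: cls_rep winv_words)
    also have "\<dots> = inv\<^bsub>GG\<^esub> (cls SS RR w [^]\<^bsub>GG\<^esub> nat (-k))"
      using w by (simp only: GG_inv[symmetric] nat_pow_inv cls_in)
    also have "\<dots> = cls SS RR w [^]\<^bsub>GG\<^esub> k" using False w cls_in by (simp only: int_pow_negative not_le)
    finally show ?thesis .
  qed
qed

lemma cls_concat: "(\<And>x. x \<in> set ws \<Longrightarrow> x \<in> words SS) \<Longrightarrow>
   cls SS RR (concat ws) = lprod GG (map (cls SS RR) ws)"
proof (induct ws)
  case Nil then show ?case by (simp add: lprod_def GG_one)
next
  case (Cons x ws)
  have x: "x \<in> words SS" and c: "concat ws \<in> words SS" using Cons.prems by (auto intro: concat_words)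
  have "cls SS RR (concat (x # ws)) = cls SS RR x \<otimes>\<^bsub>GG\<^esub> cls SS RR (concat ws)"
    using GG_mult[OF x c] by simp
  then show ?case using Cons by (simp add: lprod_def)
qed

lemma cls_wcomm: "u \<in> words SS \<Longrightarrow> v \<in> words SS \<Longrightarrow>
   cls SS RR (wcomm u v) = inv\<^bsub>GG\<^esub> (cls SS RR u) \<otimes>\<^bsub>GG\<^esub> inv\<^bsub>GG\<^esub> (cls SS RR v)
      \<otimes>\<^bsub>GG\<^esub> cls SS RR u \<otimes>\<^bsub>GG\<^esub> cls SS RR v"
  by (simp add: wcomm_def GG_inv GG_mult)

lemma cls_rel: "(l, r) \<in> RR \<Longrightarrow> cls SS RR l = cls SS RR r"
proof -
  assume lr: "(l, r) \<in> RR"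
  have w: "l \<in> words SS" "r \<in> words SS" using wfR_rels[of n m lam] lr unfolding wfR_def by auto
  have "([] @ l @ [], [] @ r @ []) \<in> pres_eq SS RR" by (rule pres_eq.rel[OF lr]) auto
  then show ?thesis using w by (simp add: cls_eq_iff[OF wfR_rels])
qed

lemma a_el_cls: "a_el n m lam i = cls SS RR (letter (A i))"
  by (simp add: a_el_def gen_elem_def cls_def)
lemma c_el_cls: "c_el n m lam t = cls SS RR (letter (C t))"
  by (simp add: c_el_def gen_elem_def cls_def)

lemma PhiG_cls: "w \<in> words SS \<Longrightarrow> PhiG n m lam (cls SS RR w) = phi (lamr m lam) w"
proof -
  assume w: "w \<in> words SS"
  have ex: "\<exists>w'. w' \<in> cls SS RR w" using cls_mem[OF w] by blast
  have "(SOME w'. w' \<in> cls SS RR w) \<in> cls SS RR w" using someI_ex[OF ex] .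
  then have "(w, SOME w'. w' \<in> cls SS RR w) \<in> pres_eq SS RR" by (simp add: cls_def)
  then show ?thesis unfolding PhiG_def phi_def using phi_resp by metis
qed


lemma hg_inst: "hg GG n m (lamr m lam) (a_el n m lam) (c_el n m lam) (PhiG n m lam)"
proof -
  interpret group GG by (rule GG_group)
  have aw: "i \<in> {1..n} \<Longrightarrow> letter (A i) \<in> words SS" for i by simp
  have cw: "t \<in> {1..m} \<Longrightarrow> letter (C t) \<in> words SS" for t by simp
  show ?thesis
  proof (unfold_locales)
    fix i assume "i \<in> {1..n}" then show "a_el n m lam i \<in> carrier GG"
      by (simp add: a_el_cls cls_in)
  next
    fix t assume "t \<in> {1..m}" then show "c_el n m lam t \<in> carrier GG"
      by (simp add: c_el_cls cls_in)
  next
    fix i t assume i: "i \<in> {1..n}" and t: "t \<in> {1..m}"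
    have "(wcomm (letter (A i)) (letter (C t)), []) \<in> RR" using i t unfolding rels_def by blast
    then have "cls SS RR (wcomm (letter (A i)) (letter (C t))) = \<one>\<^bsub>GG\<^esub>" by (simp add: cls_rel GG_one)
    then show "a_el n m lam i \<otimes>\<^bsub>GG\<^esub> c_el n m lam t = c_el n m lam t \<otimes>\<^bsub>GG\<^esub> a_el n m lam i"
      unfolding a_el_cls c_el_cls cls_wcomm[OF aw[OF i] cw[OF t]]
      by (rule group.comm_from[OF GG_group cls_in[OF aw[OF i]] cls_in[OF cw[OF t]]])
  next
    fix s t assume s: "s \<in> {1..m}" and t: "t \<in> {1..m}"
    have "(wcomm (letter (C s)) (letter (C t)), []) \<in> RR" using s t unfolding rels_def by blast
    then have "cls SS RR (wcomm (letter (C s)) (letter (C t))) = \<one>\<^bsub>GG\<^esub>" by (simp add: cls_rel GG_one)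
    then show "c_el n m lam s \<otimes>\<^bsub>GG\<^esub> c_el n m lam t = c_el n m lam t \<otimes>\<^bsub>GG\<^esub> c_el n m lam s"
      unfolding c_el_cls cls_wcomm[OF cw[OF s] cw[OF t]]
      by (rule group.comm_from[OF GG_group cls_in[OF cw[OF s]] cls_in[OF cw[OF t]]])
  next
    fix i j assume ij: "1 \<le> i" "i < j" "j \<le> n"
    then have i: "i \<in> {1..n}" and j: "j \<in> {1..n}" by auto
    have "(wcomm (letter (A i)) (letter (A j)),
       concat (map (\<lambda>t. wpow (letter (C t)) (lam i j t)) [1..<Suc m])) \<in> RR"
      using ij unfolding rels_def by blast
    then have "cls SS RR (wcomm (letter (A i)) (letter (A j))) =
       cls SS RR (concat (map (\<lambda>t. wpow (letter (C t)) (lam i j t)) [1..<Suc m]))" by (rule cls_rel)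
    also have "\<dots> = lprod GG (map (cls SS RR) (map (\<lambda>t. wpow (letter (C t)) (lam i j t)) [1..<Suc m]))"
      by (rule cls_concat) auto
    also have "\<dots> = lprod GG (map (\<lambda>t. c_el n m lam t [^]\<^bsub>GG\<^esub> lamr m lam i j t) [1..<Suc m])"
      by (intro arg_cong[where f="lprod GG"]) (auto simp: cls_wpow c_el_cls lamr_def)
    finally show "inv\<^bsub>GG\<^esub> (a_el n m lam i) \<otimes>\<^bsub>GG\<^esub> inv\<^bsub>GG\<^esub> (a_el n m lam j) \<otimes>\<^bsub>GG\<^esub> a_el n m lam i \<otimes>\<^bsub>GG\<^esub> a_el n m lam j
       = lprod GG (map (\<lambda>t. c_el n m lam t [^]\<^bsub>GG\<^esub> lamr m lam i j t) [1..<Suc m])"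
      unfolding a_el_cls cls_wcomm[OF aw[OF i] aw[OF j]] .
  next
    fix i g assume i: "i \<in> {1..n}" and g: "g \<in> carrier GG"
    then obtain w where w: "w \<in> words SS" "g = cls SS RR w" by (auto simp: GG_carrier)
    have "a_el n m lam i \<otimes>\<^bsub>GG\<^esub> g = cls SS RR ((A i, False) # w)"
      using w i by (simp add: a_el_cls GG_mult letter_def)
    then show "PhiG n m lam (a_el n m lam i \<otimes>\<^bsub>GG\<^esub> g) = actA (lamr m lam) i 1 (PhiG n m lam g)"
      using w i by (simp add: PhiG_cls phi_def)
  next
    fix t g assume t: "t \<in> {1..m}" and g: "g \<in> carrier GG"
    then obtain w where w: "w \<in> words SS" "g = cls SS RR w" by (auto simp: GG_carrier)
    have "c_el n m lam t \<otimes>\<^bsub>GG\<^esub> g = cls SS RR ((C t, False) # w)"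
      using w t by (simp add: c_el_cls GG_mult letter_def)
    then show "PhiG n m lam (c_el n m lam t \<otimes>\<^bsub>GG\<^esub> g) = actC t 1 (PhiG n m lam g)"
      using w t by (simp add: PhiG_cls phi_def)
  next
    show "PhiG n m lam \<one>\<^bsub>GG\<^esub> = (\<lambda>_. 0, \<lambda>_. 0)"
      by (simp add: GG_one PhiG_cls phi_def)
  qed
qed

end


theorem lemma4p3:
  fixes n m :: nat and lam :: "nat \<Rightarrow> nat \<Rightarrow> nat \<Rightarrow> int"
  assumes "n \<ge> 2" and "m \<ge> 1"
  shows "\<exists>(\<alpha> :: nat \<Rightarrow> gen word set \<Rightarrow> int) (\<gamma> :: nat \<Rightarrow> gen word set \<Rightarrow> int).
           \<forall>g \<in> carrier (Gpres n m lam).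
             g = normal_form n m lam (\<lambda>i. \<alpha> i g) (\<lambda>t. \<gamma> t g) \<and>
             (\<forall>x y. g = normal_form n m lam x y \<longrightarrow>
                (\<forall>i \<in> {1..n}. x i = \<alpha> i g) \<and> (\<forall>t \<in> {1..m}. y t = \<gamma> t g))"
proof -
  interpret H: hg "Gpres n m lam" n m "lamr m lam" "a_el n m lam" "c_el n m lam" "PhiG n m lam"
    by (rule hg_inst)
  have nf: "normal_form n m lam x y = H.psi (x, y)" for x y
    by (simp add: normal_form_def H.psi_def H.Ap_def H.AL_def H.Cp_def H.CL_def)
  have ex: "cls (gens n m) (rels n m lam) w = H.psi (phi (lamr m lam) w)"
    if "w \<in> words (gens n m)" for w
    using that
  proof (induct w)
    case Nil then show ?case by (simp add: phi_def H.psi_zero GG_one)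
  next
    case (Cons l w)
    obtain x b where l: "l = (x, b)" by force
    have xw: "[(x, b)] \<in> words (gens n m)" "w \<in> words (gens n m)" using Cons.prems l by auto
    have split: "cls (gens n m) (rels n m lam) (l # w) =
        cls (gens n m) (rels n m lam) [(x, b)] \<otimes>\<^bsub>Gpres n m lam\<^esub> cls (gens n m) (rels n m lam) w"
      using GG_mult[OF xw] l by simp
    have ph: "phi (lamr m lam) (l # w) = actL (lamr m lam) (x, b) (phi (lamr m lam) w)"
      using l by (simp add: phi_def)
    show ?case
    proof (cases x)
      case (A i)
      then have i: "i \<in> {1..n}" using xw by simp
      show ?thesis
      proof (cases b)
        case True
        have "cls (gens n m) (rels n m lam) [(x, b)] = inv\<^bsub>Gpres n m lam\<^esub> (a_el n m lam i)"
          using GG_inv[of "letter (A i)"] i A True by (simp add: a_el_cls letter_def)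
        then show ?thesis using split ph Cons xw H.psi_ainv[OF i] A True by simp
      next
        case False
        have "cls (gens n m) (rels n m lam) [(x, b)] = a_el n m lam i"
          using A False by (simp add: a_el_cls letter_def)
        then show ?thesis using split ph Cons xw H.psi_a[OF i] A False by simp
      qed
    next
      case (C t)
      then have t: "t \<in> {1..m}" using xw by simp
      show ?thesis
      proof (cases b)
        case True
        have "cls (gens n m) (rels n m lam) [(x, b)] = inv\<^bsub>Gpres n m lam\<^esub> (c_el n m lam t)"
          using GG_inv[of "letter (C t)"] t C True by (simp add: c_el_cls letter_def)
        then show ?thesis using split ph Cons xw H.psi_cinv[OF t] C True by simp
      next
        case False
        have "cls (gens n m) (rels n m lam) [(x, b)] = c_el n m lam t"
          using C False by (simp add: c_el_cls letter_def)
        then show ?thesis using split ph Cons xw H.psi_c[OF t] C False by simp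
      qed
    qed
  qed
  define al :: "nat \<Rightarrow> gen word set \<Rightarrow> int" where "al = (\<lambda>i g. fst (PhiG n m lam g) i)"
  define ga :: "nat \<Rightarrow> gen word set \<Rightarrow> int" where "ga = (\<lambda>t g. snd (PhiG n m lam g) t)"
  have main: "g = normal_form n m lam (\<lambda>i. al i g) (\<lambda>t. ga t g) \<and>
             (\<forall>x y. g = normal_form n m lam x y \<longrightarrow>
                (\<forall>i \<in> {1..n}. x i = al i g) \<and> (\<forall>t \<in> {1..m}. y t = ga t g))"
    if g: "g \<in> carrier (Gpres n m lam)" for g
  proof
    obtain w where w: "w \<in> words (gens n m)" "g = cls (gens n m) (rels n m lam) w"
      using g by (auto simp: GG_carrier)
    have P: "PhiG n m lam g = phi (lamr m lam) w" using w by (simp add: PhiG_cls)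
    have "(\<lambda>i. al i g) = fst (PhiG n m lam g)" "(\<lambda>t. ga t g) = snd (PhiG n m lam g)"
      by (auto simp: al_def ga_def)
    then show "g = normal_form n m lam (\<lambda>i. al i g) (\<lambda>t. ga t g)"
      unfolding nf using ex[OF w(1)] w(2) P by simp
    show "\<forall>x y. g = normal_form n m lam x y \<longrightarrow>
       (\<forall>i\<in>{1..n}. x i = al i g) \<and> (\<forall>t\<in>{1..m}. y t = ga t g)"
    proof (intro allI impI)
      fix x y assume "g = normal_form n m lam x y"
      then have "PhiG n m lam g = PhiG n m lam (H.psi (x, y))" by (simp add: nf)
      then have Q: "PhiG n m lam g = (\<lambda>k. if k \<in> {1..n} then x k else 0, \<lambda>t. if t \<in> {1..m} then y t else 0)"
        by (simp add: H.Phi_psi)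
      show "(\<forall>i\<in>{1..n}. x i = al i g) \<and> (\<forall>t\<in>{1..m}. y t = ga t g)"
        using Q by (simp add: al_def ga_def)
    qed
  qed
  show ?thesis using main by blast
qed


end
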